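(* Let $\gamma\in(1,2]$ and let $(\rho_L,u_L,p_L)$, $(\rho_R,u_R,p_R)$ be two states with $\rho_K,p_K>0$, $u_K\in\mathbb R^d$, $m_K=\rho_Ku_K$, $a_K=\sqrt{\gamma p_K/\rho_K}$. With $\langle f\rangle=\frac{f_L+f_R}2$ and $[\![f]\!]=f_R-f_L$, it holds $$\langle|u|^2\rangle\le(\|\langle u\rangle\|+\|[\![u]\!]\|)^2,\quad\langle a^2\rangle\le2\langle a\rangle^2,\quad\langle p\rangle\langle\rho\rangle^{-1}\le\frac4\gamma\langle a\rangle^2,$$ $$\langle\rho|u|^2\rangle\langle\rho\rangle^{-1}\le2(\|\langle u\rangle\|+\|[\![u]\!]\|)^2,\quad\|\langle m\rangle\|\langle\rho\rangle^{-1}\le\|\langle u\rangle\|+\frac12\|[\![u]\!]\|.$$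
   Context: $\|\cdot\|$ denotes the $\ell^1$ norm of a vector in $\mathbb R^d$. *)

theory Defs
  imports "HOL-Analysis.Analysis"
begin

text \<open>The l1 norm of a vector in R^d (the paper's double-bar norm).\<close>
definition l1norm :: "real ^ 'd \<Rightarrow> real" where
  "l1norm x = (\<Sum>i\<in>UNIV. \<bar>x $ i\<bar>)"

definition avg :: "'a::real_vector \<Rightarrow> 'a \<Rightarrow> 'a" where
  "avg fL fR = (1/2) *\<^sub>R (fL + fR)"

definition jump :: "'a::real_vector \<Rightarrow> 'a \<Rightarrow> 'a" where
  "jump fL fR = fR - fL"

definition sound_speed :: "real \<Rightarrow> real \<Rightarrow> real \<Rightarrow> real" where
  "sound_speed \<gamma> \<rho> p = sqrt (\<gamma> * p / \<rho>)"

end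

theory Submission
  imports Defs
begin

lemma l1_add: "l1norm (x + y) \<le> l1norm x + l1norm y"
  unfolding l1norm_def by (simp add: sum.distrib[symmetric] sum_mono abs_triangle_ineq)

lemma l1_scale: "l1norm (c *\<^sub>R x) = \<bar>c\<bar> * l1norm x"
  unfolding l1norm_def by (simp add: sum_distrib_left abs_mult)

lemma l1_nonneg: "0 \<le> l1norm x"
  unfolding l1norm_def by (simp add: sum_nonneg)

lemma norm_l1: "norm x \<le> l1norm x"
  unfolding l1norm_def by (rule norm_le_l1_cart)

lemma l1_bounds:
  fixes uL uR :: "real ^ 'd"
  shows "l1norm uL \<le> l1norm (avg uL uR) + 1/2 * l1norm (jump uL uR)"
    and "l1norm uR \<le> l1norm (avg uL uR) + 1/2 * l1norm (jump uL uR)"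
proof -
  have e1: "uL = avg uL uR + (-1/2) *\<^sub>R jump uL uR"
    unfolding avg_def jump_def by (simp add: vec_eq_iff field_simps)
  have e2: "uR = avg uL uR + (1/2) *\<^sub>R jump uL uR"
    unfolding avg_def jump_def by (simp add: vec_eq_iff field_simps)
  show "l1norm uL \<le> l1norm (avg uL uR) + 1/2 * l1norm (jump uL uR)"
    using l1_add[of "avg uL uR" "(-1/2) *\<^sub>R jump uL uR"] e1 l1_scale[of "-1/2" "jump uL uR"]
    by simp
  show "l1norm uR \<le> l1norm (avg uL uR) + 1/2 * l1norm (jump uL uR)"
    using l1_add[of "avg uL uR" "(1/2) *\<^sub>R jump uL uR"] e2 l1_scale[of "1/2" "jump uL uR"]
    by simp
qed

lemma wavg_le:
  fixes rL rR xL xR S :: real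
  assumes "rL > 0" "rR > 0" "xL \<le> S" "xR \<le> S"
  shows "avg (rL * xL) (rR * xR) / avg rL rR \<le> S"
proof -
  have "rL * xL + rR * xR \<le> rL * S + rR * S"
    using assms by (intro add_mono mult_left_mono) auto
  then show ?thesis using assms unfolding avg_def by (simp add: field_simps)
qed

theorem lemmaA1:
  fixes \<gamma> \<rho>L \<rho>R pL pR :: real and uL uR :: "real ^ 'd"
  assumes "1 < \<gamma>" and "\<gamma> \<le> 2"
    and "\<rho>L > 0" and "\<rho>R > 0" and "pL > 0" and "pR > 0"
  defines "mL \<equiv> \<rho>L *\<^sub>R uL" and "mR \<equiv> \<rho>R *\<^sub>R uR"
    and "aL \<equiv> sound_speed \<gamma> \<rho>L pL" and "aR \<equiv> sound_speed \<gamma> \<rho>R pR"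
  shows "avg ((norm uL)\<^sup>2) ((norm uR)\<^sup>2)
           \<le> (l1norm (avg uL uR) + l1norm (jump uL uR))\<^sup>2 \<and>
         avg (aL\<^sup>2) (aR\<^sup>2) \<le> 2 * (avg aL aR)\<^sup>2 \<and>
         avg pL pR / avg \<rho>L \<rho>R \<le> 4 / \<gamma> * (avg aL aR)\<^sup>2 \<and>
         avg (\<rho>L * (norm uL)\<^sup>2) (\<rho>R * (norm uR)\<^sup>2) / avg \<rho>L \<rho>R
           \<le> 2 * (l1norm (avg uL uR) + l1norm (jump uL uR))\<^sup>2 \<and>
         l1norm (avg mL mR) / avg \<rho>L \<rho>R
           \<le> l1norm (avg uL uR) + 1/2 * l1norm (jump uL uR)"
proof -
  define A where "A = l1norm (avg uL uR)"
  define J where "J = l1norm (jump uL uR)"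
  define S where "S = A + 1/2 * J"
  have A0: "0 \<le> A" and J0: "0 \<le> J" unfolding A_def J_def by (auto intro: l1_nonneg)
  have bL: "l1norm uL \<le> S" and bR: "l1norm uR \<le> S"
    using l1_bounds[where uL=uL and uR=uR] unfolding S_def A_def J_def by auto
  have nL: "norm uL \<le> S" using norm_l1[of uL] bL by linarith
  have nR: "norm uR \<le> S" using norm_l1[of uR] bR by linarith
  have S0: "0 \<le> S" using nL norm_ge_zero[of uL] by linarith
  have SAJ: "S \<le> A + J" unfolding S_def using J0 by simp
  have sq: "S\<^sup>2 \<le> (A + J)\<^sup>2" using SAJ S0 by (intro power_mono) auto
  have nL2: "(norm uL)\<^sup>2 \<le> S\<^sup>2" using nL by (intro power_mono) auto
  have nR2: "(norm uR)\<^sup>2 \<le> S\<^sup>2" using nR by (intro power_mono) auto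
  have c1: "avg ((norm uL)\<^sup>2) ((norm uR)\<^sup>2) \<le> (A + J)\<^sup>2"
    using nL2 nR2 sq unfolding avg_def by simp
  have aL0: "0 \<le> aL" unfolding aL_def sound_speed_def using assms(1,3,5) by (simp add: less_imp_le)
  have aR0: "0 \<le> aR" unfolding aR_def sound_speed_def using assms(1,4,6) by (simp add: less_imp_le)
  have c2: "avg (aL\<^sup>2) (aR\<^sup>2) \<le> 2 * (avg aL aR)\<^sup>2"
    using aL0 aR0 unfolding avg_def by (simp add: power2_eq_square algebra_simps)
  have aL2: "aL\<^sup>2 = \<gamma> * pL / \<rho>L" unfolding aL_def sound_speed_def
    using assms(1,3,5) by simp
  have aR2: "aR\<^sup>2 = \<gamma> * pR / \<rho>R" unfolding aR_def sound_speed_def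
    using assms(1,4,6) by simp
  have pL: "pL = \<rho>L * (aL\<^sup>2 / \<gamma>)" using aL2 assms(1,3) by (simp add: field_simps)
  have pR: "pR = \<rho>R * (aR\<^sup>2 / \<gamma>)" using aR2 assms(1,4) by (simp add: field_simps)
  have m2: "(max aL aR)\<^sup>2 \<le> (aL + aR)\<^sup>2" using aL0 aR0
    by (intro power_mono) auto
  have "aL\<^sup>2 \<le> (max aL aR)\<^sup>2" "aR\<^sup>2 \<le> (max aL aR)\<^sup>2" using aL0 aR0
    by (auto intro: power_mono)
  then have "aL\<^sup>2 / \<gamma> \<le> (aL + aR)\<^sup>2 / \<gamma>" "aR\<^sup>2 / \<gamma> \<le> (aL + aR)\<^sup>2 / \<gamma>"
    using m2 assms(1) by (auto intro: divide_right_mono)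
  then have "avg pL pR / avg \<rho>L \<rho>R \<le> (aL + aR)\<^sup>2 / \<gamma>"
    unfolding pL pR using wavg_le assms(3,4) by blast
  also have "\<dots> = 4 / \<gamma> * (avg aL aR)\<^sup>2" unfolding avg_def
    using assms(1) by (simp add: power2_eq_square field_simps)
  finally have c3: "avg pL pR / avg \<rho>L \<rho>R \<le> 4 / \<gamma> * (avg aL aR)\<^sup>2" .
  have "avg (\<rho>L * (norm uL)\<^sup>2) (\<rho>R * (norm uR)\<^sup>2) / avg \<rho>L \<rho>R \<le> S\<^sup>2"
    using wavg_le assms(3,4) nL2 nR2 by blast
  also have "\<dots> \<le> 2 * (A + J)\<^sup>2" using sq by (simp add: power2_eq_square) (smt (verit) zero_le_square sq)
  finally have c4: "avg (\<rho>L * (norm uL)\<^sup>2) (\<rho>R * (norm uR)\<^sup>2) / avg \<rho>L \<rho>R \<le> 2 * (A + J)\<^sup>2" .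
  have "l1norm (avg mL mR) \<le> avg (\<rho>L * l1norm uL) (\<rho>R * l1norm uR)"
    unfolding avg_def mL_def mR_def l1_scale
    using l1_add[of "\<rho>L *\<^sub>R uL" "\<rho>R *\<^sub>R uR"] assms(3,4)
    by (simp only: l1_scale) simp
  then have "l1norm (avg mL mR) / avg \<rho>L \<rho>R \<le> avg (\<rho>L * l1norm uL) (\<rho>R * l1norm uR) / avg \<rho>L \<rho>R"
    using assms(3,4) unfolding avg_def by (intro divide_right_mono) auto
  also have "\<dots> \<le> S" using wavg_le assms(3,4) bL bR by blast
  finally have c5: "l1norm (avg mL mR) / avg \<rho>L \<rho>R \<le> S" .
  show ?thesis using c1 c2 c3 c4 c5 unfolding A_def J_def S_def by auto
qed

end
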